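(* Assume nondegeneracy. Then $\mathcal{B}^*$ has at most $M!$ extreme points.
   Context: Let $M\ge1$. Let $X_1,\dots,X_M,S$ be random variables on finite alphabets with joint pmf $p(x_1,\dots,x_M,s)$, and for each $1\le k\le M$ let $q_k(z_k|x_k)$ be a fixed conditional pmf on a finite alphabet $\mathcal Z_k$, so that $(X_1,\dots,X_M,S,Z_1,\dots,Z_M)$ has joint pmf $p(x_1,\dots,x_M,s)\prod_{k=1}^M q_k(z_k|x_k)$. For $A\subseteq\{1,\dots,M\}$ write $X_A=(X_i)_{i\in A}$, $Z_A=(Z_i)_{i\in A}$ ($Z_\emptyset$ is a constant), and $I^c=\{1,\dots,M\}\setminus I$. Define $\mathcal{B}^*$ as the set of $(R_1,\dots,R_M)\in\mathbb{R}^M$ with $I(X_I;Z_I\mid Z_{I^c},S)\le\sum_{i\in I}R_i$ for every nonempty $I\subseteq\{1,\dots,M\}$. Nondegeneracy means: for all disjoint nonempty $I,I'\subseteq\{1,\dots,M\}$, $I(Z_I;Z_{I'}\mid Z_{(I\cup I')^c},S)>0$. *)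

theory Defs
  imports "HOL-Analysis.Analysis"
begin

text \<open>Discrete probability on a finite outcome set Omega with weights P.
  The marginal pmf of a random variable A (a function on outcomes).\<close>
definition rv_pmf :: "'w set \<Rightarrow> ('w \<Rightarrow> real) \<Rightarrow> ('w \<Rightarrow> 'a) \<Rightarrow> 'a \<Rightarrow> real" where
  "rv_pmf Omega P A a = (\<Sum>w\<in>{w\<in>Omega. A w = a}. P w)"

text \<open>Conditional mutual information I(A;B|C) in bits, with the convention 0 log 0 = 0.\<close>
definition cond_mutual_info ::
  "'w set \<Rightarrow> ('w \<Rightarrow> real) \<Rightarrow> ('w \<Rightarrow> 'a) \<Rightarrow> ('w \<Rightarrow> 'b) \<Rightarrow> ('w \<Rightarrow> 'c) \<Rightarrow> real" where
  "cond_mutual_info Omega P A B C =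
     (\<Sum>t\<in>(\<lambda>w. (A w, B w, C w)) ` Omega.
        (case t of (a, b, c) \<Rightarrow>
          (let pabc = rv_pmf Omega P (\<lambda>w. (A w, B w, C w)) (a, b, c);
               pc = rv_pmf Omega P C c;
               pac = rv_pmf Omega P (\<lambda>w. (A w, C w)) (a, c);
               pbc = rv_pmf Omega P (\<lambda>w. (B w, C w)) (b, c)
           in if pabc = 0 then 0 else pabc * log 2 ((pabc * pc) / (pac * pbc)))))"

text \<open>Outcome space of (X_1..X_M, S, Z_1..Z_M); indices are the elements of the finite type 'n.\<close>
definition outcomes :: "('n \<Rightarrow> 'x set) \<Rightarrow> 's set \<Rightarrow> ('n \<Rightarrow> 'z set) \<Rightarrow> (('n \<Rightarrow> 'x) \<times> 's \<times> ('n \<Rightarrow> 'z)) set" where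
  "outcomes XA SA ZA = {(x, s, z). (\<forall>i. x i \<in> XA i) \<and> s \<in> SA \<and> (\<forall>i. z i \<in> ZA i)}"

definition joint_pmf :: "(('n::finite \<Rightarrow> 'x) \<Rightarrow> 's \<Rightarrow> real) \<Rightarrow> ('n \<Rightarrow> 'x \<Rightarrow> 'z \<Rightarrow> real)
    \<Rightarrow> ('n \<Rightarrow> 'x) \<times> 's \<times> ('n \<Rightarrow> 'z) \<Rightarrow> real" where
  "joint_pmf p q = (\<lambda>(x, s, z). p x s * (\<Prod>k\<in>UNIV. q k (x k) (z k)))"

text \<open>Random variables X_I, Z_I, S on the outcome space (Z_{} is constant).\<close>
definition X_rv :: "'n set \<Rightarrow> ('n \<Rightarrow> 'x) \<times> 's \<times> ('n \<Rightarrow> 'z) \<Rightarrow> ('n \<Rightarrow> 'x)" where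
  "X_rv I = (\<lambda>(x, s, z). restrict x I)"
definition Z_rv :: "'n set \<Rightarrow> ('n \<Rightarrow> 'x) \<times> 's \<times> ('n \<Rightarrow> 'z) \<Rightarrow> ('n \<Rightarrow> 'z)" where
  "Z_rv I = (\<lambda>(x, s, z). restrict z I)"
definition S_rv :: "('n \<Rightarrow> 'x) \<times> 's \<times> ('n \<Rightarrow> 'z) \<Rightarrow> 's" where
  "S_rv = (\<lambda>(x, s, z). s)"

definition B_star :: "('n::finite \<Rightarrow> 'x set) \<Rightarrow> 's set \<Rightarrow> ('n \<Rightarrow> 'z set)
    \<Rightarrow> (('n \<Rightarrow> 'x) \<Rightarrow> 's \<Rightarrow> real) \<Rightarrow> ('n \<Rightarrow> 'x \<Rightarrow> 'z \<Rightarrow> real) \<Rightarrow> (real^'n) set" where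
  "B_star XA SA ZA p q = {R. \<forall>I. I \<noteq> {} \<longrightarrow>
      cond_mutual_info (outcomes XA SA ZA) (joint_pmf p q) (X_rv I) (Z_rv I)
        (\<lambda>w. (Z_rv (- I) w, S_rv w)) \<le> (\<Sum>i\<in>I. R $ i)}"

definition nondegenerate :: "('n::finite \<Rightarrow> 'x set) \<Rightarrow> 's set \<Rightarrow> ('n \<Rightarrow> 'z set)
    \<Rightarrow> (('n \<Rightarrow> 'x) \<Rightarrow> 's \<Rightarrow> real) \<Rightarrow> ('n \<Rightarrow> 'x \<Rightarrow> 'z \<Rightarrow> real) \<Rightarrow> bool" where
  "nondegenerate XA SA ZA p q \<longleftrightarrow> (\<forall>I I'. I \<noteq> {} \<longrightarrow> I' \<noteq> {} \<longrightarrow> I \<inter> I' = {} \<longrightarrow>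
      cond_mutual_info (outcomes XA SA ZA) (joint_pmf p q) (Z_rv I) (Z_rv I')
        (\<lambda>w. (Z_rv (- (I \<union> I')) w, S_rv w)) > 0)"

end

theory Submission
  imports Defs "HOL-Combinatorics.Multiset_Permutations"
begin


definition Lg :: "'w set \<Rightarrow> ('w \<Rightarrow> real) \<Rightarrow> ('w \<Rightarrow> 'a) \<Rightarrow> real" where
  "Lg Om P T = (\<Sum>w\<in>Om. P w * ln (rv_pmf Om P T (T w)))"

lemma rv_pmf_nonneg: "finite Om \<Longrightarrow> (\<And>w. w\<in>Om \<Longrightarrow> P w \<ge> 0) \<Longrightarrow> rv_pmf Om P T a \<ge> 0"
  unfolding rv_pmf_def by (intro sum_nonneg) auto

lemma rv_pmf_ge: "finite Om \<Longrightarrow> (\<And>w. w\<in>Om \<Longrightarrow> P w \<ge> 0) \<Longrightarrow> w \<in> Om \<Longrightarrow> P w \<le> rv_pmf Om P T (T w)"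
  unfolding rv_pmf_def by (rule member_le_sum) auto

lemma fiber_sum:
  assumes "finite Om"
  shows "(\<Sum>t\<in>T`Om. rv_pmf Om P T t * g t) = (\<Sum>w\<in>Om. P w * g (T w))"
proof -
  have "(\<Sum>t\<in>T`Om. rv_pmf Om P T t * g t) = (\<Sum>t\<in>T`Om. \<Sum>w\<in>{w\<in>Om. T w = t}. P w * g (T w))"
    unfolding rv_pmf_def sum_distrib_right by (intro sum.cong refl) auto
  also have "\<dots> = (\<Sum>w\<in>Om. P w * g (T w))"
    using assms by (intro sum.group) auto
  finally show ?thesis .
qed

lemma cmi_Lg:
  assumes fin: "finite Om" and nn: "\<And>w. w\<in>Om \<Longrightarrow> P w \<ge> 0"
  shows "cond_mutual_info Om P A B C =
    (Lg Om P (\<lambda>w. (A w, B w, C w)) + Lg Om P C - Lg Om P (\<lambda>w. (A w, C w)) - Lg Om P (\<lambda>w. (B w, C w))) / ln 2"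
proof -
  define T where "T = (\<lambda>w. (A w, B w, C w))"
  define g where "g = (\<lambda>t. case t of (a, b, c) \<Rightarrow>
     (if rv_pmf Om P T (a,b,c) = 0 then 0 else
       log 2 ((rv_pmf Om P T (a,b,c) * rv_pmf Om P C c) / (rv_pmf Om P (\<lambda>w. (A w, C w)) (a, c) * rv_pmf Om P (\<lambda>w. (B w, C w)) (b, c)))))"
  have "cond_mutual_info Om P A B C = (\<Sum>t\<in>T`Om. rv_pmf Om P T t * g t)"
    unfolding cond_mutual_info_def T_def g_def
    by (intro sum.cong refl) (auto simp: Let_def)
  also have "\<dots> = (\<Sum>w\<in>Om. P w * g (T w))" by (rule fiber_sum[OF fin])
  also have "\<dots> = (\<Sum>w\<in>Om. (P w * ln (rv_pmf Om P T (T w)) + P w * ln (rv_pmf Om P C (C w))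
       - P w * ln (rv_pmf Om P (\<lambda>w. (A w, C w)) (A w, C w)) - P w * ln (rv_pmf Om P (\<lambda>w. (B w, C w)) (B w, C w))) / ln 2)"
  proof (intro sum.cong refl)
    fix w assume w: "w \<in> Om"
    show "P w * g (T w) = (P w * ln (rv_pmf Om P T (T w)) + P w * ln (rv_pmf Om P C (C w))
       - P w * ln (rv_pmf Om P (\<lambda>w. (A w, C w)) (A w, C w)) - P w * ln (rv_pmf Om P (\<lambda>w. (B w, C w)) (B w, C w))) / ln 2"
    proof (cases "P w = 0")
      case True thus ?thesis by simp
    next
      case False
      hence pos: "P w > 0" using nn[OF w] by simp
      have ge: "P w \<le> rv_pmf Om P U (U w)" for U :: "_ \<Rightarrow> 'z"
        by (rule rv_pmf_ge[OF fin nn w])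
      have p1: "rv_pmf Om P T (T w) > 0" using ge[of T] pos by linarith
      have p2: "rv_pmf Om P C (C w) > 0" using ge[of C] pos by linarith
      have p3: "rv_pmf Om P (\<lambda>w. (A w, C w)) (A w, C w) > 0"
        using ge[of "\<lambda>w. (A w, C w)"] pos by simp
      have p4: "rv_pmf Om P (\<lambda>w. (B w, C w)) (B w, C w) > 0"
        using ge[of "\<lambda>w. (B w, C w)"] pos by simp
      have "g (T w) = log 2 ((rv_pmf Om P T (T w) * rv_pmf Om P C (C w)) / (rv_pmf Om P (\<lambda>w. (A w, C w)) (A w, C w) * rv_pmf Om P (\<lambda>w. (B w, C w)) (B w, C w)))"
        using p1 unfolding g_def by (simp add: T_def)
      also have "\<dots> = (ln (rv_pmf Om P T (T w)) + ln (rv_pmf Om P C (C w)) - ln (rv_pmf Om P (\<lambda>w. (A w, C w)) (A w, C w)) - ln (rv_pmf Om P (\<lambda>w. (B w, C w)) (B w, C w))) / ln 2"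
        using p1 p2 p3 p4 by (simp add: log_def ln_mult ln_div)
      finally have gw: "g (T w) = (ln (rv_pmf Om P T (T w)) + ln (rv_pmf Om P C (C w)) - ln (rv_pmf Om P (\<lambda>w. (A w, C w)) (A w, C w)) - ln (rv_pmf Om P (\<lambda>w. (B w, C w)) (B w, C w))) / ln 2" .
      show ?thesis unfolding gw by (simp add: algebra_simps diff_divide_distrib add_divide_distrib)
    qed
  qed
  also have "\<dots> = (Lg Om P T + Lg Om P C - Lg Om P (\<lambda>w. (A w, C w)) - Lg Om P (\<lambda>w. (B w, C w))) / ln 2"
    unfolding Lg_def sum_divide_distrib[symmetric] sum.distrib sum_subtractf by simp
  finally show ?thesis by (simp add: T_def)
qed

lemma Lg_cong:
  assumes "\<And>w1 w2. w1 \<in> Om \<Longrightarrow> w2 \<in> Om \<Longrightarrow> T w1 = T w2 \<longleftrightarrow> U w1 = U w2"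
  shows "Lg Om P T = Lg Om P U"
  unfolding Lg_def rv_pmf_def
proof (intro sum.cong refl)
  fix w assume w: "w \<in> Om"
  have "{w'\<in>Om. T w' = T w} = {w'\<in>Om. U w' = U w}" using assms w by auto
  thus "P w * ln (sum P {w' \<in> Om. T w' = T w}) = P w * ln (sum P {w' \<in> Om. U w' = U w})" by simp
qed

lemma cmi_nonneg_aux:
  fixes A :: "'w \<Rightarrow> 'a" and B :: "'w \<Rightarrow> 'b" and C :: "'w \<Rightarrow> 'c"
  assumes fin: "finite Om" and nn: "\<And>w. w\<in>Om \<Longrightarrow> P w \<ge> 0"
  defines "pabc \<equiv> rv_pmf Om P (\<lambda>w. (A w, B w, C w))"
      and "pac \<equiv> rv_pmf Om P (\<lambda>w. (A w, C w))"
      and "pbc \<equiv> rv_pmf Om P (\<lambda>w. (B w, C w))"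
      and "pc \<equiv> rv_pmf Om P C"
  shows "(\<Sum>w\<in>Om. P w * (pac (A w, C w) * pbc (B w, C w) / (pabc (A w, B w, C w) * pc (C w))))
          \<le> (\<Sum>w\<in>Om. P w)"
proof -
  define T where "T = (\<lambda>w. (A w, B w, C w))"
  define H where "H = (\<lambda>(a,b,c). pac (a, c) * pbc (b, c) / (pabc (a, b, c) * pc c))"
  have nnp: "rv_pmf Om P U x \<ge> 0" for U :: "'w \<Rightarrow> 'u" and x
    by (rule rv_pmf_nonneg[OF fin]) (rule nn)
  have "(\<Sum>w\<in>Om. P w * (pac (A w, C w) * pbc (B w, C w) / (pabc (A w, B w, C w) * pc (C w))))
     = (\<Sum>w\<in>Om. P w * H (T w))" by (simp add: H_def T_def)
  also have "\<dots> = (\<Sum>t\<in>T`Om. pabc t * H t)"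
    using fiber_sum[OF fin, where T=T and P=P and g=H] by (simp add: pabc_def T_def)
  also have "\<dots> \<le> (\<Sum>t\<in>T`Om. pac (fst t, snd (snd t)) * pbc (fst (snd t), snd (snd t)) / pc (snd (snd t)))"
  proof (intro sum_mono)
    fix t assume "t \<in> T`Om"
    obtain a b c where t: "t = (a,b,c)" by (cases t) auto
    show "pabc t * H t \<le> pac (fst t, snd (snd t)) * pbc (fst (snd t), snd (snd t)) / pc (snd (snd t))"
      using nnp[of "\<lambda>w. (A w, C w)"] nnp[of "\<lambda>w. (B w, C w)"] nnp[of C] nnp[of T]
      by (cases "pabc t = 0") (auto simp: t H_def pac_def pbc_def pc_def pabc_def T_def)
  qed
  also have "\<dots> = (\<Sum>t\<in>T`Om. \<Sum>w'\<in>Om. P w' * ((if B w' = fst (snd t) \<and> C w' = snd (snd t) then 1 else 0) * pac (fst t, C w') / pc (C w')))"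
  proof (intro sum.cong refl)
    fix t :: "'a \<times> 'b \<times> 'c"
    obtain a b c where t: "t = (a,b,c)" by (cases t) auto
    have "(\<Sum>w'\<in>Om. P w' * ((if B w' = b \<and> C w' = c then 1 else 0) * pac (a, C w') / pc (C w')))
        = (\<Sum>w'\<in>Om. if B w' = b \<and> C w' = c then P w' * pac (a, c) / pc c else 0)"
      by (intro sum.cong refl) auto
    also have "\<dots> = (\<Sum>w'\<in>{w'\<in>Om. B w' = b \<and> C w' = c}. P w' * pac (a, c) / pc c)"
      by (rule sum.inter_filter[OF fin, symmetric])
    also have "\<dots> = pac (a, c) * pbc (b, c) / pc c"
      unfolding pbc_def rv_pmf_def sum_divide_distrib[symmetric] sum_distrib_right[symmetric]
      by (simp add: mult.commute)
    finally show "pac (fst t, snd (snd t)) * pbc (fst (snd t), snd (snd t)) / pc (snd (snd t)) =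
      (\<Sum>w'\<in>Om. P w' * ((if B w' = fst (snd t) \<and> C w' = snd (snd t) then 1 else 0) * pac (fst t, C w') / pc (C w')))"
      by (simp add: t)
  qed
  also have "\<dots> = (\<Sum>w'\<in>Om. P w' * ((\<Sum>t\<in>T`Om. (if B w' = fst (snd t) \<and> C w' = snd (snd t) then 1 else 0) * pac (fst t, C w')) / pc (C w')))"
    by (subst sum.swap) (simp add: sum_distrib_left sum_divide_distrib)
  also have "\<dots> \<le> (\<Sum>w'\<in>Om. P w')"
  proof (intro sum_mono)
    fix w' assume w': "w' \<in> Om"
    define Sx where "Sx = {t \<in> T`Om. fst (snd t) = B w' \<and> snd (snd t) = C w'}"
    have "(\<Sum>t\<in>T`Om. (if B w' = fst (snd t) \<and> C w' = snd (snd t) then 1 else 0) * pac (fst t, C w'))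
        = (\<Sum>t\<in>Sx. pac (fst t, C w'))"
    proof -
      have "(\<Sum>t\<in>T`Om. (if B w' = fst (snd t) \<and> C w' = snd (snd t) then 1 else 0) * pac (fst t, C w'))
        = (\<Sum>t\<in>T`Om. if fst (snd t) = B w' \<and> snd (snd t) = C w' then pac (fst t, C w') else 0)"
        by (intro sum.cong refl) auto
      also have "\<dots> = (\<Sum>t\<in>Sx. pac (fst t, C w'))"
        unfolding Sx_def using fin by (intro sum.inter_filter[symmetric]) auto
      finally show ?thesis .
    qed
    also have "\<dots> = (\<Sum>a\<in>fst ` Sx. pac (a, C w'))"
      by (subst sum.reindex) (auto simp: inj_on_def Sx_def)
    also have "\<dots> \<le> (\<Sum>a\<in>A ` Om. pac (a, C w'))"
      using fin nnp by (intro sum_mono2) (auto simp: Sx_def T_def pac_def)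
    also have "\<dots> = (\<Sum>a\<in>A ` Om. \<Sum>w\<in>{w\<in>{w\<in>Om. C w = C w'}. A w = a}. P w)"
      unfolding pac_def rv_pmf_def by (intro sum.cong refl arg_cong[where f="sum P"]) auto
    also have "\<dots> = (\<Sum>w\<in>{w\<in>Om. C w = C w'}. P w)"
      using fin by (intro sum.group) auto
    also have "\<dots> = pc (C w')" by (simp add: pc_def rv_pmf_def)
    finally have inner: "(\<Sum>t\<in>T`Om. (if B w' = fst (snd t) \<and> C w' = snd (snd t) then 1 else 0) * pac (fst t, C w')) \<le> pc (C w')" .
    have inner0: "(\<Sum>t\<in>T`Om. (if B w' = fst (snd t) \<and> C w' = snd (snd t) then 1 else 0) * pac (fst t, C w')) \<ge> 0"
      using nnp by (intro sum_nonneg) (auto simp: pac_def)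
    have "(\<Sum>t\<in>T`Om. (if B w' = fst (snd t) \<and> C w' = snd (snd t) then 1 else 0) * pac (fst t, C w')) / pc (C w') \<le> 1"
      using inner inner0 nnp[of C "C w'"] unfolding pc_def
      by (cases "rv_pmf Om P C (C w') = 0") (auto simp: divide_le_eq_1)
    thus "P w' * ((\<Sum>t\<in>T`Om. (if B w' = fst (snd t) \<and> C w' = snd (snd t) then 1 else 0) * pac (fst t, C w')) / pc (C w')) \<le> P w'"
      using nn[OF w'] mult_left_le[of "(\<Sum>t\<in>T`Om. (if B w' = fst (snd t) \<and> C w' = snd (snd t) then 1 else 0) * pac (fst t, C w')) / pc (C w')" "P w'"]
      by simp
  qed
  finally show ?thesis .
qed

lemma Lg_submod:
  fixes A :: "'w \<Rightarrow> 'a" and B :: "'w \<Rightarrow> 'b" and C :: "'w \<Rightarrow> 'c"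
  assumes fin: "finite Om" and nn: "\<And>w. w\<in>Om \<Longrightarrow> P w \<ge> 0"
  shows "Lg Om P (\<lambda>w. (A w, C w)) + Lg Om P (\<lambda>w. (B w, C w)) \<le> Lg Om P (\<lambda>w. (A w, B w, C w)) + Lg Om P C"
proof -
  define pabc where "pabc \<equiv> rv_pmf Om P (\<lambda>w. (A w, B w, C w))"
  define pac where "pac \<equiv> rv_pmf Om P (\<lambda>w. (A w, C w))"
  define pbc where "pbc \<equiv> rv_pmf Om P (\<lambda>w. (B w, C w))"
  define pc where "pc \<equiv> rv_pmf Om P C"
  define r where "r = (\<lambda>w. pac (A w, C w) * pbc (B w, C w) / (pabc (A w, B w, C w) * pc (C w)))"
  have "Lg Om P (\<lambda>w. (A w, C w)) + Lg Om P (\<lambda>w. (B w, C w)) - Lg Om P (\<lambda>w. (A w, B w, C w)) - Lg Om P C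
     = (\<Sum>w\<in>Om. P w * ln (pac (A w, C w)) + P w * ln (pbc (B w, C w)) - P w * ln (pabc (A w, B w, C w)) - P w * ln (pc (C w)))"
    unfolding Lg_def sum.distrib sum_subtractf pac_def pbc_def pabc_def pc_def by simp
  also have "\<dots> \<le> (\<Sum>w\<in>Om. P w * (r w - 1))"
  proof (intro sum_mono)
    fix w assume w: "w \<in> Om"
    show "P w * ln (pac (A w, C w)) + P w * ln (pbc (B w, C w)) - P w * ln (pabc (A w, B w, C w)) - P w * ln (pc (C w)) \<le> P w * (r w - 1)"
    proof (cases "P w = 0")
      case True thus ?thesis by simp
    next
      case False
      hence pos: "P w > 0" using nn[OF w] by simp
      have ge: "P w \<le> rv_pmf Om P U (U w)" for U :: "_ \<Rightarrow> 'z"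
        by (rule rv_pmf_ge[OF fin nn w])
      have p1: "pabc (A w, B w, C w) > 0" using ge[of "\<lambda>w. (A w, B w, C w)"] pos by (simp add: pabc_def)
      have p2: "pc (C w) > 0" using ge[of C] pos by (simp add: pc_def)
      have p3: "pac (A w, C w) > 0" using ge[of "\<lambda>w. (A w, C w)"] pos by (simp add: pac_def)
      have p4: "pbc (B w, C w) > 0" using ge[of "\<lambda>w. (B w, C w)"] pos by (simp add: pbc_def)
      have rpos: "r w > 0" using p1 p2 p3 p4 by (simp add: r_def)
      have "ln (r w) = ln (pac (A w, C w)) + ln (pbc (B w, C w)) - ln (pabc (A w, B w, C w)) - ln (pc (C w))"
        using p1 p2 p3 p4 by (simp add: r_def ln_mult ln_div)
      moreover have "ln (r w) \<le> r w - 1" using rpos by (rule ln_le_minus_one)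
      ultimately have "ln (pac (A w, C w)) + ln (pbc (B w, C w)) - ln (pabc (A w, B w, C w)) - ln (pc (C w)) \<le> r w - 1" by simp
      from mult_left_mono[OF this, of "P w"] pos show ?thesis by (simp add: algebra_simps)
    qed
  qed
  also have "\<dots> = (\<Sum>w\<in>Om. P w * r w) - (\<Sum>w\<in>Om. P w)"
    by (simp add: algebra_simps sum_subtractf)
  also have "\<dots> \<le> 0"
    using cmi_nonneg_aux[OF fin nn, where A=A and B=B and C=C] by (simp add: r_def pac_def pbc_def pabc_def pc_def)
  finally show ?thesis by simp
qed



lemma restrict_eq_iff: "restrict f A = restrict g A \<longleftrightarrow> (\<forall>i\<in>A. f i = g i)"
  by (auto simp: restrict_def fun_eq_iff)

lemma outcomes_eq: "outcomes XA SA ZA = PiE UNIV XA \<times> (SA \<times> PiE UNIV ZA)"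
  by (auto simp: outcomes_def PiE_iff)

lemma Z_rv_eq: "Z_rv J w1 = Z_rv J w2 \<longleftrightarrow> (\<forall>i\<in>J. snd (snd w1) i = snd (snd w2) i)"
  by (simp add: Z_rv_def case_prod_unfold restrict_eq_iff)

locale setting =
  fixes XA :: "'n::finite \<Rightarrow> 'x set" and SA :: "'s set" and ZA :: "'n \<Rightarrow> 'z set"
    and p :: "('n \<Rightarrow> 'x) \<Rightarrow> 's \<Rightarrow> real" and q :: "'n \<Rightarrow> 'x \<Rightarrow> 'z \<Rightarrow> real"
  assumes fin_X: "\<And>i. finite (XA i)" and fin_S: "finite SA" and fin_Z: "\<And>i. finite (ZA i)"
    and p_nonneg: "\<And>x s. (\<forall>i. x i \<in> XA i) \<Longrightarrow> s \<in> SA \<Longrightarrow> p x s \<ge> 0"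
    and q_nonneg: "\<And>k x z. x \<in> XA k \<Longrightarrow> z \<in> ZA k \<Longrightarrow> q k x z \<ge> 0"
    and q_sum: "\<And>k x. x \<in> XA k \<Longrightarrow> (\<Sum>z\<in>ZA k. q k x z) = 1"
begin

abbreviation "Om \<equiv> outcomes XA SA ZA"
abbreviation "P \<equiv> joint_pmf p q"

lemma fin_Om: "finite Om"
  unfolding outcomes_eq using fin_X fin_S fin_Z by (intro finite_cartesian_product finite_PiE) auto

lemma P_nonneg: "w \<in> Om \<Longrightarrow> P w \<ge> 0"
  by (auto simp: outcomes_def joint_pmf_def intro!: mult_nonneg_nonneg p_nonneg prod_nonneg q_nonneg)

definition F :: "'n set \<Rightarrow> real" where
  "F I = cond_mutual_info Om P (X_rv I) (Z_rv I) (\<lambda>w. (Z_rv (- I) w, S_rv w))"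

definition Phi :: "'n set \<Rightarrow> real" where
  "Phi J = Lg Om P (\<lambda>w. (Z_rv J w, S_rv w))"

definition c :: "'n \<Rightarrow> real" where
  "c i = (\<Sum>w\<in>Om. P w * ln (q i (fst w i) (snd (snd w) i)))"

lemma markov_pmf:
  assumes w: "(x0, s0, z0) \<in> Om"
  shows "rv_pmf Om P (\<lambda>w. (X_rv I w, Z_rv I w, (Z_rv (- I) w, S_rv w))) (restrict x0 I, restrict z0 I, (restrict z0 (-I), s0))
       = (\<Prod>k\<in>I. q k (x0 k) (z0 k)) *
         rv_pmf Om P (\<lambda>w. (X_rv I w, (Z_rv (- I) w, S_rv w))) (restrict x0 I, (restrict z0 (-I), s0))"
proof -
  define XI where "XI = {x \<in> PiE UNIV XA. \<forall>i\<in>I. x i = x0 i}"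
  define ZI where "ZI = PiE UNIV (\<lambda>k. if k \<in> I then ZA k else {z0 k})"
  have x0: "\<forall>i. x0 i \<in> XA i" and s0: "s0 \<in> SA" and z0: "\<forall>i. z0 i \<in> ZA i"
    using w by (auto simp: outcomes_def)
  define G where "G = (\<lambda>x. \<Prod>k\<in>UNIV. if k \<in> I then 1 else q k (x k) (z0 k))"
  have fac: "(\<Prod>k\<in>UNIV. q k (x k) (z0 k)) = (\<Prod>k\<in>I. q k (x0 k) (z0 k)) * G x" if "x \<in> XI" for x
  proof -
    have "(\<Prod>k\<in>UNIV. q k (x k) (z0 k)) = (\<Prod>k\<in>UNIV. (if k \<in> I then q k (x0 k) (z0 k) else 1) * (if k \<in> I then 1 else q k (x k) (z0 k)))"
      using that by (intro prod.cong refl) (auto simp: XI_def)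
    also have "\<dots> = (\<Prod>k\<in>I. q k (x0 k) (z0 k)) * G x"
      unfolding prod.distrib G_def by (simp add: prod.If_cases)
    finally show ?thesis .
  qed
  have "{w \<in> Om. (X_rv I w, Z_rv I w, (Z_rv (- I) w, S_rv w)) = (restrict x0 I, restrict z0 I, (restrict z0 (-I), s0))}
      = (\<lambda>x. (x, s0, z0)) ` XI"
  proof (intro set_eqI iffI)
    fix w assume "w \<in> {w \<in> Om. (X_rv I w, Z_rv I w, (Z_rv (- I) w, S_rv w)) = (restrict x0 I, restrict z0 I, (restrict z0 (-I), s0))}"
    then obtain x s z where wd: "w = (x,s,z)" "(x,s,z) \<in> Om" "restrict x I = restrict x0 I" "restrict z I = restrict z0 I"
       "restrict z (-I) = restrict z0 (-I)" "s = s0"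
      by (cases w) (auto simp: X_rv_def Z_rv_def S_rv_def)
    hence "z = z0" unfolding restrict_eq_iff by (metis ComplI ext)
    with wd show "w \<in> (\<lambda>x. (x, s0, z0)) ` XI"
      by (auto simp: XI_def restrict_eq_iff outcomes_def PiE_iff)
  qed (use x0 s0 z0 in \<open>auto simp: XI_def X_rv_def Z_rv_def S_rv_def outcomes_def PiE_iff restrict_eq_iff\<close>)
  note S1 = this
  have e1: "rv_pmf Om P (\<lambda>w. (X_rv I w, Z_rv I w, (Z_rv (- I) w, S_rv w))) (restrict x0 I, restrict z0 I, (restrict z0 (-I), s0))
       = (\<Sum>x\<in>XI. p x s0 * (\<Prod>k\<in>UNIV. q k (x k) (z0 k)))"
    unfolding rv_pmf_def S1 by (subst sum.reindex) (auto simp: inj_on_def joint_pmf_def)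
  have "{w \<in> Om. (X_rv I w, (Z_rv (- I) w, S_rv w)) = (restrict x0 I, (restrict z0 (-I), s0))}
      = (\<lambda>(x, z). (x, s0, z)) ` (XI \<times> ZI)"
  proof (intro set_eqI iffI)
    fix w assume "w \<in> {w \<in> Om. (X_rv I w, (Z_rv (- I) w, S_rv w)) = (restrict x0 I, (restrict z0 (-I), s0))}"
    then obtain x s z where wd: "w = (x,s,z)" "(x,s,z) \<in> Om" "restrict x I = restrict x0 I"
       "restrict z (-I) = restrict z0 (-I)" "s = s0"
      by (cases w) (auto simp: X_rv_def Z_rv_def S_rv_def)
    thus "w \<in> (\<lambda>(x, z). (x, s0, z)) ` (XI \<times> ZI)"
      by (auto simp: XI_def ZI_def restrict_eq_iff outcomes_def PiE_iff image_iff)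
  qed (use x0 s0 z0 in \<open>auto simp: XI_def ZI_def X_rv_def Z_rv_def S_rv_def outcomes_def PiE_iff restrict_eq_iff split: if_splits; metis\<close>)
  note S2 = this
  have "rv_pmf Om P (\<lambda>w. (X_rv I w, (Z_rv (- I) w, S_rv w))) (restrict x0 I, (restrict z0 (-I), s0))
       = (\<Sum>(x,z)\<in>XI \<times> ZI. p x s0 * (\<Prod>k\<in>UNIV. q k (x k) (z k)))"
    unfolding rv_pmf_def S2 by (subst sum.reindex) (auto simp: inj_on_def joint_pmf_def case_prod_unfold)
  also have "\<dots> = (\<Sum>x\<in>XI. p x s0 * (\<Sum>z\<in>ZI. \<Prod>k\<in>UNIV. q k (x k) (z k)))"
    by (simp add: sum.cartesian_product[symmetric] sum_distrib_left)
  also have "\<dots> = (\<Sum>x\<in>XI. p x s0 * G x)"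
  proof (intro sum.cong refl arg_cong[where f="\<lambda>t. p _ s0 * t"])
    fix x assume x: "x \<in> XI"
    have "(\<Sum>z\<in>ZI. \<Prod>k\<in>UNIV. q k (x k) (z k)) = (\<Prod>k\<in>UNIV. \<Sum>y\<in>(if k \<in> I then ZA k else {z0 k}). q k (x k) y)"
      unfolding ZI_def by (rule prod_sum_PiE[symmetric]) (auto intro: fin_Z)
    also have "\<dots> = G x" unfolding G_def
      using x q_sum x0 by (intro prod.cong refl) (auto simp: XI_def PiE_iff)
    finally show "(\<Sum>z\<in>ZI. \<Prod>k\<in>UNIV. q k (x k) (z k)) = G x" .
  qed
  finally have e2: "rv_pmf Om P (\<lambda>w. (X_rv I w, (Z_rv (- I) w, S_rv w))) (restrict x0 I, (restrict z0 (-I), s0))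
       = (\<Sum>x\<in>XI. p x s0 * G x)" .
  show ?thesis unfolding e1 e2 sum_distrib_left
    by (intro sum.cong refl) (simp add: fac)
qed

lemma F_formula: "F I = ((\<Sum>i\<in>I. c i) + Phi (- I) - Phi UNIV) / ln 2"
proof -
  let ?ABC = "\<lambda>w. (X_rv I w, Z_rv I w, (Z_rv (- I) w, S_rv w))"
  let ?AC = "\<lambda>w. (X_rv I w, (Z_rv (- I) w, S_rv w))"
  let ?BC = "\<lambda>w. (Z_rv I w, (Z_rv (- I) w, S_rv w))"
  have F1: "F I = (Lg Om P ?ABC + Phi (-I) - Lg Om P ?AC - Lg Om P ?BC) / ln 2"
    unfolding F_def Phi_def by (rule cmi_Lg[OF fin_Om P_nonneg])
  have BC: "Lg Om P ?BC = Phi UNIV"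
    unfolding Phi_def
  proof (rule Lg_cong)
    fix w1 w2 :: "('n \<Rightarrow> 'x) \<times> 's \<times> ('n \<Rightarrow> 'z)"
    show "?BC w1 = ?BC w2 \<longleftrightarrow> (Z_rv UNIV w1, S_rv w1) = (Z_rv UNIV w2, S_rv w2)"
      by (simp add: Z_rv_eq) blast
  qed
  have nnp: "rv_pmf Om P U x \<ge> 0" for U :: "_ \<Rightarrow> 'u" and x
    by (rule rv_pmf_nonneg[OF fin_Om]) (rule P_nonneg)
  have "Lg Om P ?ABC - Lg Om P ?AC = (\<Sum>w\<in>Om. P w * (\<Sum>i\<in>I. ln (q i (fst w i) (snd (snd w) i))))"
    unfolding Lg_def sum_subtractf[symmetric]
  proof (intro sum.cong refl)
    fix w assume w: "w \<in> Om"
    obtain x0 s0 z0 where wd: "w = (x0, s0, z0)" by (cases w) auto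
    have w': "(x0,s0,z0) \<in> Om" using w wd by simp
    have eq: "?ABC w = (restrict x0 I, restrict z0 I, (restrict z0 (-I), s0))"
      "?AC w = (restrict x0 I, (restrict z0 (-I), s0))"
      by (auto simp: wd X_rv_def Z_rv_def S_rv_def)
    show "P w * ln (rv_pmf Om P ?ABC (?ABC w)) - P w * ln (rv_pmf Om P ?AC (?AC w)) =
          P w * (\<Sum>i\<in>I. ln (q i (fst w i) (snd (snd w) i)))"
    proof (cases "P w = 0")
      case True thus ?thesis by simp
    next
      case False
      hence pos: "P w > 0" using P_nonneg[OF w] by simp
      have "P w \<le> rv_pmf Om P ?ABC (?ABC w)" by (rule rv_pmf_ge[OF fin_Om P_nonneg w])
      hence gp: "rv_pmf Om P ?ABC (?ABC w) > 0" using pos by linarith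
      have h: "rv_pmf Om P ?ABC (?ABC w) = (\<Prod>k\<in>I. q k (x0 k) (z0 k)) * rv_pmf Om P ?AC (?AC w)"
        unfolding eq by (rule markov_pmf[OF w'])
      have ne: "(\<Prod>k\<in>I. q k (x0 k) (z0 k)) * rv_pmf Om P ?AC (?AC w) \<noteq> 0"
        using gp unfolding h by (metis less_irrefl)
      hence ne1: "(\<Prod>k\<in>I. q k (x0 k) (z0 k)) \<noteq> 0" and ne2: "rv_pmf Om P ?AC (?AC w) \<noteq> 0" by auto
      have "ln (rv_pmf Om P ?ABC (?ABC w)) = ln (\<Prod>k\<in>I. q k (x0 k) (z0 k)) + ln (rv_pmf Om P ?AC (?AC w))"
        using ne1 ne2 unfolding h by (simp add: ln_mult)
      moreover have "ln (\<Prod>k\<in>I. q k (x0 k) (z0 k)) = (\<Sum>i\<in>I. ln (q i (x0 i) (z0 i)))"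
        using ne1 by (intro ln_prod) auto
      ultimately show ?thesis by (simp add: wd algebra_simps)
    qed
  qed
  also have "\<dots> = (\<Sum>i\<in>I. c i)"
    unfolding c_def sum_distrib_left by (rule sum.swap)
  finally show ?thesis unfolding F1 BC by (simp add: algebra_simps)
qed

lemma Phi_submod: "Phi U + Phi V \<le> Phi (U \<inter> V) + Phi (U \<union> V)"
proof -
  have "Lg Om P (\<lambda>w. (Z_rv (U - V) w, (Z_rv (U \<inter> V) w, S_rv w))) + Lg Om P (\<lambda>w. (Z_rv (V - U) w, (Z_rv (U \<inter> V) w, S_rv w)))
     \<le> Lg Om P (\<lambda>w. (Z_rv (U - V) w, Z_rv (V - U) w, (Z_rv (U \<inter> V) w, S_rv w))) + Lg Om P (\<lambda>w. (Z_rv (U \<inter> V) w, S_rv w))"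
    by (rule Lg_submod[OF fin_Om P_nonneg])
  moreover have "Lg Om P (\<lambda>w. (Z_rv (U - V) w, (Z_rv (U \<inter> V) w, S_rv w))) = Phi U"
    unfolding Phi_def by (rule Lg_cong) (simp add: Z_rv_eq, blast)
  moreover have "Lg Om P (\<lambda>w. (Z_rv (V - U) w, (Z_rv (U \<inter> V) w, S_rv w))) = Phi V"
    unfolding Phi_def by (rule Lg_cong) (simp add: Z_rv_eq, blast)
  moreover have "Lg Om P (\<lambda>w. (Z_rv (U - V) w, Z_rv (V - U) w, (Z_rv (U \<inter> V) w, S_rv w))) = Phi (U \<union> V)"
    unfolding Phi_def by (rule Lg_cong) (simp add: Z_rv_eq, blast)
  ultimately show ?thesis unfolding Phi_def by linarith
qed

lemma F_super: "F A + F B \<le> F (A \<union> B) + F (A \<inter> B)"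
proof -
  have s: "sum c (A \<union> B) + sum c (A \<inter> B) = sum c A + sum c B" by (rule sum.union_inter) auto
  have "Phi (- A) + Phi (- B) \<le> Phi (- (A \<union> B)) + Phi (- (A \<inter> B))"
    using Phi_submod[of "- A" "- B"] by (simp add: Compl_Un Compl_Int)
  hence "((\<Sum>i\<in>A. c i) + Phi (- A) - Phi UNIV) + ((\<Sum>i\<in>B. c i) + Phi (- B) - Phi UNIV)
     \<le> ((\<Sum>i\<in>A \<union> B. c i) + Phi (- (A \<union> B)) - Phi UNIV) + ((\<Sum>i\<in>A \<inter> B. c i) + Phi (- (A \<inter> B)) - Phi UNIV)"
    using s by linarith
  hence "(((\<Sum>i\<in>A. c i) + Phi (- A) - Phi UNIV) + ((\<Sum>i\<in>B. c i) + Phi (- B) - Phi UNIV)) / ln 2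
     \<le> (((\<Sum>i\<in>A \<union> B. c i) + Phi (- (A \<union> B)) - Phi UNIV) + ((\<Sum>i\<in>A \<inter> B. c i) + Phi (- (A \<inter> B)) - Phi UNIV)) / ln 2"
    by (intro divide_right_mono) auto
  thus ?thesis unfolding F_formula add_divide_distrib .
qed

lemma F_empty: "F {} = 0"
  unfolding F_formula by simp

end


locale supmod =
  fixes F :: "'n::finite set \<Rightarrow> real"
  assumes F0: "F {} = 0"
    and Fsup: "\<And>A B. F A + F B \<le> F (A \<union> B) + F (A \<inter> B)"
begin

definition BB :: "(real^'n) set" where
  "BB = {R. \<forall>I. I \<noteq> {} \<longrightarrow> F I \<le> (\<Sum>i\<in>I. R $ i)}"

lemma BB_ge: "v \<in> BB \<Longrightarrow> F I \<le> (\<Sum>i\<in>I. v $ i)"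
  unfolding BB_def using F0 by (cases "I = {}") auto

lemma perturb:
  fixes d :: "real^'n"
  assumes v: "v \<in> BB" and d: "d \<noteq> 0"
    and slack: "\<And>I. I \<noteq> {} \<Longrightarrow> (\<Sum>i\<in>I. d $ i) \<noteq> 0 \<Longrightarrow> F I < (\<Sum>i\<in>I. v $ i)"
  shows "\<not> v extreme_point_of BB"
proof
  assume ext: "v extreme_point_of BB"
  define K where "K = {I. I \<noteq> {} \<and> (\<Sum>i\<in>I. d $ i) \<noteq> 0}"
  define e where "e = Min (insert 1 ((\<lambda>I. ((\<Sum>i\<in>I. v $ i) - F I) / \<bar>\<Sum>i\<in>I. d $ i\<bar>) ` K))"
  have finK: "finite K" by simp
  have epos: "e > 0" unfolding e_def using finK
    by (subst Min_gr_iff) (auto simp: K_def slack)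
  have ele: "e * \<bar>\<Sum>i\<in>I. d $ i\<bar> \<le> (\<Sum>i\<in>I. v $ i) - F I" if "I \<in> K" for I
  proof -
    have "e \<le> ((\<Sum>i\<in>I. v $ i) - F I) / \<bar>\<Sum>i\<in>I. d $ i\<bar>"
      unfolding e_def using finK that by (intro Min_le) auto
    thus ?thesis using that by (simp add: K_def pos_le_divide_eq)
  qed
  have inB: "v + t *\<^sub>R d \<in> BB" if "\<bar>t\<bar> = e" for t
    unfolding BB_def
  proof (intro CollectI allI impI)
    fix I :: "'n set" assume I: "I \<noteq> {}"
    have sum_eq: "(\<Sum>i\<in>I. (v + t *\<^sub>R d) $ i) = (\<Sum>i\<in>I. v $ i) + t * (\<Sum>i\<in>I. d $ i)"
      by (simp add: sum.distrib sum_distrib_left)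
    show "F I \<le> (\<Sum>i\<in>I. (v + t *\<^sub>R d) $ i)"
    proof (cases "(\<Sum>i\<in>I. d $ i) = 0")
      case True thus ?thesis using BB_ge[OF v, of I] sum_eq by simp
    next
      case False
      hence "I \<in> K" using I by (simp add: K_def)
      from ele[OF this] have "\<bar>t * (\<Sum>i\<in>I. d $ i)\<bar> \<le> (\<Sum>i\<in>I. v $ i) - F I"
        using that by (simp add: abs_mult)
      thus ?thesis using sum_eq by linarith
    qed
  qed
  have "v = midpoint (v + e *\<^sub>R d) (v + (- e) *\<^sub>R d)"
    by (simp add: midpoint_def scaleR_add_right[symmetric] flip: scaleR_2)
  moreover have "v + e *\<^sub>R d \<noteq> v + (- e) *\<^sub>R d" using d epos by (simp only: add_left_cancel scaleR_cancel_right) simp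
  ultimately have "v \<in> open_segment (v + e *\<^sub>R d) (v + (- e) *\<^sub>R d)"
    by (metis midpoint_in_open_segment)
  moreover have "v + e *\<^sub>R d \<in> BB" "v + (- e) *\<^sub>R d \<in> BB" using inB[of e] inB[of "- e"] epos by auto
  ultimately show False using ext unfolding extreme_point_of_def by blast
qed

definition tight :: "real^'n \<Rightarrow> 'n set \<Rightarrow> bool" where
  "tight v I \<longleftrightarrow> (\<Sum>i\<in>I. v $ i) = F I"

lemma tight_closed:
  assumes v: "v \<in> BB" and A: "tight v A" and B: "tight v B"
  shows "tight v (A \<union> B)" "tight v (A \<inter> B)"
proof -
  have s: "(\<Sum>i\<in>A \<union> B. v $ i) + (\<Sum>i\<in>A \<inter> B. v $ i) = (\<Sum>i\<in>A. v $ i) + (\<Sum>i\<in>B. v $ i)"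
    by (rule sum.union_inter) auto
  have "F A + F B \<le> F (A \<union> B) + F (A \<inter> B)" by (rule Fsup)
  moreover have "F (A \<union> B) \<le> (\<Sum>i\<in>A \<union> B. v $ i)" "F (A \<inter> B) \<le> (\<Sum>i\<in>A \<inter> B. v $ i)"
    using BB_ge[OF v] by auto
  ultimately show "tight v (A \<union> B)" "tight v (A \<inter> B)" using A B s unfolding tight_def by linarith+
qed

lemma tight_Union:
  assumes v: "v \<in> BB" and "\<forall>I\<in>S. tight v I"
  shows "tight v (\<Union>S)"
proof -
  have "finite S" by simp
  thus ?thesis using assms(2)
  proof (induction S rule: finite_induct)
    case empty thus ?case by (simp add: tight_def F0)
  next
    case (insert A S) thus ?case using tight_closed(1)[OF v] by simp
  qed
qed

lemma tight_Inter:
  assumes v: "v \<in> BB" and U: "tight v UNIV" and "\<forall>I\<in>S. tight v I"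
  shows "tight v (\<Inter>S)"
proof -
  have "finite S" by simp
  thus ?thesis using assms(3)
  proof (induction S rule: finite_induct)
    case empty thus ?case using U by simp
  next
    case (insert A S) thus ?case using tight_closed(2)[OF v] by simp
  qed
qed

lemma extreme_chain:
  assumes ext: "v extreme_point_of BB"
  shows "\<exists>xs\<in>permutations_of_set UNIV. \<forall>k. tight v (set (take k xs))"
proof -
  have v: "v \<in> BB" using ext by (simp add: extreme_point_of_def)
  have ge: "F I \<le> (\<Sum>i\<in>I. v $ i)" for I by (rule BB_ge[OF v])
  have E1: "\<exists>I. tight v I \<and> i \<in> I" for i
  proof (rule ccontr)
    assume no: "\<not> (\<exists>I. tight v I \<and> i \<in> I)"
    define d :: "real^'n" where "d = (\<chi> j. if j = i then 1 else 0)"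
    have "d \<noteq> 0" by (auto simp: d_def vec_eq_iff)
    moreover have "F I < (\<Sum>j\<in>I. v $ j)" if "I \<noteq> {}" "(\<Sum>j\<in>I. d $ j) \<noteq> 0" for I
    proof -
      have "i \<in> I" using that(2) by (auto simp: d_def sum.delta split: if_splits)
      hence "\<not> tight v I" using no by blast
      thus ?thesis using ge[of I] by (simp add: tight_def)
    qed
    ultimately have "\<not> v extreme_point_of BB" by (intro perturb[OF v]) auto
    thus False using ext by simp
  qed
  have E2: "\<exists>I. tight v I \<and> (i \<in> I) \<noteq> (j \<in> I)" if ij: "i \<noteq> j" for i j
  proof (rule ccontr)
    assume no: "\<not> (\<exists>I. tight v I \<and> (i \<in> I) \<noteq> (j \<in> I))"
    define d :: "real^'n" where "d = (\<chi> l. (if l = i then 1 else 0) - (if l = j then 1 else 0))"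
    have "d $ i = 1" using ij by (simp add: d_def)
    hence "d \<noteq> 0" by auto
    moreover have "F I < (\<Sum>l\<in>I. v $ l)" if "I \<noteq> {}" "(\<Sum>l\<in>I. d $ l) \<noteq> 0" for I
    proof -
      have "(\<Sum>l\<in>I. d $ l) = (if i \<in> I then 1 else 0) - (if j \<in> I then 1 else 0)"
        by (simp add: d_def sum_subtractf sum.delta)
      hence "(i \<in> I) \<noteq> (j \<in> I)" using that(2) by (auto split: if_splits)
      hence "\<not> tight v I" using no by blast
      thus ?thesis using ge[of I] by (simp add: tight_def)
    qed
    ultimately have "\<not> v extreme_point_of BB" by (intro perturb[OF v]) auto
    thus False using ext by simp
  qed
  have U: "tight v UNIV"
  proof -
    have "\<Union>{I. tight v I} = UNIV" using E1 by blast
    moreover have "tight v (\<Union>{I. tight v I})" by (rule tight_Union[OF v]) auto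
    ultimately show ?thesis by simp
  qed
  define M where "M = (\<lambda>i. \<Inter>{I. tight v I \<and> i \<in> I})"
  have Mt: "tight v (M i)" for i unfolding M_def by (rule tight_Inter[OF v U]) auto
  have Mi: "i \<in> M i" for i unfolding M_def by auto
  have Msub: "j \<in> M i \<Longrightarrow> M j \<subseteq> M i" for i j
    using Mt[of i] unfolding M_def by blast
  have Mne: "M i \<noteq> M j" if ij: "i \<noteq> j" for i j
  proof -
    obtain I where I: "tight v I" "(i \<in> I) \<noteq> (j \<in> I)" using E2[OF ij] by blast
    show ?thesis
    proof (cases "i \<in> I")
      case True
      hence "M i \<subseteq> I" using I unfolding M_def by blast
      thus ?thesis using True I Mi[of j] by auto
    next
      case False
      hence "j \<in> I" using I by simp
      hence "M j \<subseteq> I" using I unfolding M_def by blast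
      thus ?thesis using False I Mi[of i] by auto
    qed
  qed
  obtain xs0 :: "'n list" where xs0: "set xs0 = UNIV" "distinct xs0"
    using finite_distinct_list[of "UNIV :: 'n set"] by auto
  define xs where "xs = sort_key (\<lambda>i. card (M i)) xs0"
  have xs: "set xs = UNIV" "distinct xs" "sorted (map (\<lambda>i. card (M i)) xs)"
    using xs0 by (auto simp: xs_def)
  have pref: "tight v (set (take k xs))" for k
  proof -
    have "set (take k xs) = \<Union>(M ` set (take k xs))"
    proof (intro equalityI subsetI)
      fix j assume "j \<in> set (take k xs)" thus "j \<in> \<Union>(M ` set (take k xs))" using Mi by blast
    next
      fix j assume "j \<in> \<Union>(M ` set (take k xs))"
      then obtain i where i: "i \<in> set (take k xs)" "j \<in> M i" by blast
      then obtain l where l: "l < length (take k xs)" "take k xs ! l = i" by (auto simp: in_set_conv_nth)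
      have l': "l < k" "l < length xs" "xs ! l = i" using l by auto
      obtain m where m: "m < length xs" "xs ! m = j" using xs(1) by (metis UNIV_I in_set_conv_nth)
      show "j \<in> set (take k xs)"
      proof (rule ccontr)
        assume nj: "j \<notin> set (take k xs)"
        have "\<not> m < k" proof
          assume "m < k" hence "take k xs ! m = j" "m < length (take k xs)" using m by auto
          thus False using nj by (metis nth_mem)
        qed
        hence lm: "l \<le> m" using l' by simp
        have "card (M i) \<le> card (M j)"
          using sorted_nth_mono[OF xs(3) lm] m l' by simp
        moreover have "i \<noteq> j" using l' m nj i(1) by auto
        hence "M j \<subset> M i" using Msub[OF i(2)] Mne by blast
        hence "card (M j) < card (M i)" by (intro psubset_card_mono) auto
        ultimately show False by simp
      qed
    qed
    moreover have "tight v (\<Union>(M ` set (take k xs)))" using Mt by (intro tight_Union[OF v]) auto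
    ultimately show ?thesis by simp
  qed
  show ?thesis using xs pref by (auto simp: permutations_of_set_def)
qed

lemma chain_unique:
  assumes xs: "xs \<in> permutations_of_set UNIV"
    and tv: "\<forall>k. tight v (set (take k xs))" and tw: "\<forall>k. tight w (set (take k xs))"
  shows "v = w"
proof -
  have d: "distinct xs" and s: "set xs = UNIV" using xs by (auto simp: permutations_of_set_def)
  have eq: "(\<Sum>i\<in>set (take k xs). v $ i) = (\<Sum>i\<in>set (take k xs). w $ i)" for k
    using tv tw by (simp add: tight_def)
  have "v $ (xs ! l) = w $ (xs ! l)" if l: "l < length xs" for l
  proof -
    have st: "set (take (Suc l) xs) = insert (xs ! l) (set (take l xs))"
      using l by (simp add: take_Suc_conv_app_nth)
    have nin: "xs ! l \<notin> set (take l xs)"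
      using d l by (metis distinct_take id_take_nth_drop not_distinct_conv_prefix) 
    show ?thesis using eq[of "Suc l"] eq[of l] unfolding st using nin by simp
  qed
  thus ?thesis using s by (simp add: vec_eq_iff) (metis UNIV_I in_set_conv_nth)
qed

theorem extreme_count:
  "finite {v. v extreme_point_of BB} \<and> card {v. v extreme_point_of BB} \<le> fact CARD('n)"
proof -
  define E where "E = {v. v extreme_point_of BB}"
  define ord where "ord = (\<lambda>v. SOME xs. xs \<in> permutations_of_set (UNIV :: 'n set) \<and> (\<forall>k. tight v (set (take k xs))))"
  have ordp: "ord v \<in> permutations_of_set UNIV \<and> (\<forall>k. tight v (set (take k (ord v))))" if "v \<in> E" for v
    unfolding ord_def by (rule someI_ex) (use extreme_chain that in \<open>auto simp: E_def\<close>)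
  have inj: "inj_on ord E"
    by (rule inj_onI) (metis ordp chain_unique)
  have sub: "ord ` E \<subseteq> permutations_of_set UNIV" using ordp by auto
  have fin: "finite E" using inj_on_finite[OF inj sub] by simp
  have "card E \<le> card (permutations_of_set (UNIV :: 'n set))"
    using card_inj_on_le[OF inj sub] by simp
  thus ?thesis using fin by (simp add: E_def)
qed

end

theorem lemma3:
  fixes XA :: "'n::finite \<Rightarrow> 'x set" and SA :: "'s set" and ZA :: "'n \<Rightarrow> 'z set"
    and p :: "('n \<Rightarrow> 'x) \<Rightarrow> 's \<Rightarrow> real" and q :: "'n \<Rightarrow> 'x \<Rightarrow> 'z \<Rightarrow> real"
  assumes fin_X: "\<And>i. finite (XA i)" and fin_S: "finite SA" and fin_Z: "\<And>i. finite (ZA i)"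
    and p_nonneg: "\<And>x s. (\<forall>i. x i \<in> XA i) \<Longrightarrow> s \<in> SA \<Longrightarrow> p x s \<ge> 0"
    and p_sum: "(\<Sum>(x, s)\<in>{(x, s). (\<forall>i. x i \<in> XA i) \<and> s \<in> SA}. p x s) = 1"
    and q_nonneg: "\<And>k x z. x \<in> XA k \<Longrightarrow> z \<in> ZA k \<Longrightarrow> q k x z \<ge> 0"
    and q_sum: "\<And>k x. x \<in> XA k \<Longrightarrow> (\<Sum>z\<in>ZA k. q k x z) = 1"
    and nondeg: "nondegenerate XA SA ZA p q"
  shows "finite {v. v extreme_point_of B_star XA SA ZA p q}
         \<and> card {v. v extreme_point_of B_star XA SA ZA p q} \<le> fact CARD('n)"
proof -
  interpret S: setting XA SA ZA p q
    by unfold_locales (use fin_X fin_S fin_Z p_nonneg q_nonneg q_sum in auto)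
  interpret SM: supmod S.F
    by unfold_locales (rule S.F_empty, rule S.F_super)
  have "B_star XA SA ZA p q = SM.BB"
    unfolding B_star_def SM.BB_def S.F_def ..
  thus ?thesis using SM.extreme_count by simp
qed

end
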